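(* For every $n\ge1$ there is a bijection between $\bar{Q}_4(0,n)$ and $P_7(0,n)$.
   Context: Partitions: $\lambda_1\ge\cdots\ge\lambda_\ell>0$, $\ell(\lambda)=\ell$, $\lambda_i=0$ for $i>\ell$, $s(\lambda)$ the smallest part with $s(\emptyset)=+\infty$. Rank $=\lambda_1-\ell$. Durfee symbol $(\alpha,\beta)_j$ of $\lambda$: $j$ is the largest integer with $\lambda_j\ge j$, $\alpha$ is the conjugate of $(\lambda_1-j,\dots,\lambda_j-j)$, $\beta=(\lambda_{j+1},\lambda_{j+2},\dots)$; $|\lambda|=|\alpha|+|\beta|+j^2$. $\bar{Q}_4(0,n)$ is the set of partitions of $n$ whose Durfee symbol $(\alpha,\beta)_j$ satisfies $j\ge1$, $\ell(\beta)-\ell(\alpha)\ge1$, $\alpha_1=\alpha_2=j$, $s(\alpha)\ge2$, $\beta_1=\beta_2=j$ and $s(\beta)=2$. $P_7(0,n)$ is the set of partitions of $n$ with rank $\ge0$ whose Durfee symbol $(\gamma,\delta)_{j'}$ satisfies $j'\ge1$, $\ell(\gamma)=\ell(\delta)$, $\gamma_1=j'-1>\gamma_2$, $\delta_1=j'$, and $\delta$ has no part equal to $2$. *)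

theory Defs
  imports Main "HOL-Library.Extended_Nat"
begin

definition is_partition :: "nat list \<Rightarrow> bool" where
  "is_partition p \<longleftrightarrow> sorted_wrt (\<ge>) p \<and> 0 \<notin> set p"

definition partitions :: "nat \<Rightarrow> nat list set" where
  "partitions n = {p. is_partition p \<and> sum_list p = n}"

definition part :: "nat list \<Rightarrow> nat \<Rightarrow> nat" where
  "part p i = (if 1 \<le> i \<and> i \<le> length p then p ! (i - 1) else 0)"

definition smallest :: "nat list \<Rightarrow> enat" where
  "smallest p = (if p = [] then \<infinity> else enat (Min (set p)))"

definition rank :: "nat list \<Rightarrow> int" where
  "rank p = int (part p 1) - int (length p)"

definition conj :: "nat list \<Rightarrow> nat list" where
  "conj mu = map (\<lambda>k. length (filter (\<lambda>x. k \<le> x) mu)) [1..<Suc (Max (insert 0 (set mu)))]"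

definition durfee :: "nat list \<Rightarrow> nat" where
  "durfee p = Max (insert 0 {i. 1 \<le> i \<and> i \<le> length p \<and> i \<le> part p i})"

definition dalpha :: "nat list \<Rightarrow> nat list" where
  "dalpha p = conj (map (\<lambda>x. x - durfee p) (take (durfee p) p))"

definition dbeta :: "nat list \<Rightarrow> nat list" where
  "dbeta p = drop (durfee p) p"

definition Q4bar :: "nat \<Rightarrow> nat list set" where
  "Q4bar n = {p \<in> partitions n.
     (let j = durfee p; a = dalpha p; b = dbeta p in
       j \<ge> 1 \<and> int (length b) - int (length a) \<ge> 1 \<and>
       part a 1 = j \<and> part a 2 = j \<and> smallest a \<ge> 2 \<and>
       part b 1 = j \<and> part b 2 = j \<and> smallest b = 2)}"

definition P7 :: "nat \<Rightarrow> nat list set" where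
  "P7 n = {p \<in> partitions n. rank p \<ge> 0 \<and>
     (let j = durfee p; g = dalpha p; d = dbeta p in
       j \<ge> 1 \<and> length g = length d \<and>
       part g 1 = j - 1 \<and> j - 1 > part g 2 \<and>
       part d 1 = j \<and> 2 \<notin> set d)}"

end

theory Submission
  imports Defs
begin


definition cnt :: "nat list \<Rightarrow> nat \<Rightarrow> nat" where
  "cnt X k = length (filter (\<lambda>x. k \<le> x) X)"

lemma cnt_Cons: "cnt (x#xs) k = (if k \<le> x then Suc (cnt xs k) else cnt xs k)"
  by (simp add: cnt_def)

lemma part_Cons: "i \<ge> 1 \<Longrightarrow> part (x#xs) i = (if i = 1 then x else part xs (i - 1))"
  unfolding part_def by (auto simp: nth_Cons')

lemma part_sorted_le_hd: "sorted_wrt (\<ge>) (x#xs) \<Longrightarrow> part (x#xs) i \<le> x"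
  unfolding part_def by (auto simp: nth_Cons' dest!: nth_mem)

lemma cnt_zero: "\<forall>x\<in>set X. x < k \<Longrightarrow> cnt X k = 0"
  unfolding cnt_def by (auto simp: filter_empty_conv)

lemma galois:
  assumes "sorted_wrt (\<ge>) X" "k \<ge> 1" "i \<ge> 1"
  shows "i \<le> cnt X k \<longleftrightarrow> k \<le> part X i"
  using assms
proof (induction X arbitrary: i)
  case Nil
  then show ?case by (simp add: cnt_def part_def)
next
  case (Cons x xs)
  show ?case
  proof (cases "k \<le> x")
    case False
    then have "cnt (x#xs) k = 0" using Cons.prems(1) by (intro cnt_zero) auto
    moreover have "part (x#xs) i \<le> x" using Cons.prems(1) by (rule part_sorted_le_hd)
    ultimately show ?thesis using False Cons.prems by auto
  next
    case True
    show ?thesis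
    proof (cases "i = 1")
      case True
      then show ?thesis using \<open>k \<le> x\<close> by (simp add: cnt_Cons part_Cons)
    next
      case False
      then have "i - 1 \<ge> 1" using Cons.prems by auto
      then have "i - 1 \<le> cnt xs k \<longleftrightarrow> k \<le> part xs (i - 1)"
        using Cons by auto
      then show ?thesis using False \<open>k \<le> x\<close> Cons.prems by (auto simp: cnt_Cons part_Cons)
    qed
  qed
qed

lemma cnt_antimono: "k \<le> l \<Longrightarrow> cnt X l \<le> cnt X k"
  unfolding cnt_def by (induction X) auto

lemma cnt_le_length: "cnt X k \<le> length X"
  unfolding cnt_def by simp

lemma part_conj: "k \<ge> 1 \<Longrightarrow> part (conj X) k = cnt X k"
proof -
  assume k: "k \<ge> 1"
  define M where "M = Max (insert 0 (set X))"
  have len: "length (conj X) = M" by (simp add: conj_def M_def)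
  show ?thesis
  proof (cases "k \<le> M")
    case True
    have "[1..<Suc M] ! (k - 1) = k" using True k by (subst nth_upt) auto
    then have "conj X ! (k - 1) = cnt X k"
      using k True by (simp add: conj_def M_def[symmetric] cnt_def nth_upt del: upt_Suc)
    then show ?thesis using True k len by (simp add: part_def)
  next
    case False
    have "\<forall>x\<in>set X. x < k" using False unfolding M_def
      by (metis List.finite_set Max_ge finite_insert insertCI le_trans not_le_imp_less)
    then show ?thesis using False len by (simp add: part_def cnt_zero)
  qed
qed

lemma conj_partition: "is_partition (conj X)"
proof -
  define M where "M = Max (insert 0 (set X))"
  have s: "sorted_wrt (\<ge>) (map (cnt X) [1..<Suc M])"
    by (auto simp: sorted_wrt_map sorted_wrt_iff_nth_less cnt_antimono simp del: upt_Suc)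
  have "0 \<notin> set (map (cnt X) [1..<Suc M])"
  proof
    assume "0 \<in> set (map (cnt X) [1..<Suc M])"
    then obtain k where k: "1 \<le> k" "k \<le> M" "cnt X k = 0" by auto
    then have "M \<noteq> 0" by auto
    then have "M \<in> set X" unfolding M_def
      by (metis Max_in empty_not_insert finite_insert finite_set insertE)
    then show False using k by (auto simp: cnt_def filter_empty_conv)
  qed
  with s show ?thesis unfolding is_partition_def conj_def M_def cnt_def by simp
qed

lemma filter_upt_le: "m \<le> M \<Longrightarrow> filter (\<lambda>k. k \<le> m) [1..<Suc M] = [1..<Suc m]"
proof (induction M)
  case 0
  then show ?case by simp
next
  case (Suc M)
  show ?case
  proof (cases "m = Suc M")
    case True
    then have "filter (\<lambda>k. k \<le> m) [1..<Suc (Suc M)] = [1..<Suc (Suc M)]"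
      by (simp add: filter_id_conv del: upt_Suc)
    then show ?thesis using True by simp
  next
    case False
    then show ?thesis using Suc by simp
  qed
qed

lemma part_le_part1: "sorted_wrt (\<ge>) a \<Longrightarrow> part a i \<le> part a 1"
  by (cases a) (auto simp: part_sorted_le_hd part_Cons, simp add: part_def)

lemma cnt_map_cnt:
  assumes "sorted_wrt (\<ge>) a" "i \<ge> 1" "part a 1 \<le> m"
  shows "cnt (map (cnt a) [1..<Suc m]) i = part a i"
proof -
  have "cnt (map (cnt a) [1..<Suc m]) i = length (filter (\<lambda>k. i \<le> cnt a k) [1..<Suc m])"
    by (simp add: cnt_def filter_map o_def del: upt_Suc)
  also have "filter (\<lambda>k. i \<le> cnt a k) [1..<Suc m] = filter (\<lambda>k. k \<le> part a i) [1..<Suc m]"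
    by (rule filter_cong) (use assms galois in auto)
  also have "\<dots> = [1..<Suc (part a i)]"
    using part_le_part1[OF assms(1), of i] assms(3) by (intro filter_upt_le) auto
  finally show ?thesis by simp
qed

lemma Max_ge_part1: "part X 1 \<le> Max (insert 0 (set X))"
  unfolding part_def by (cases X) auto

lemma cnt_conj:
  assumes "sorted_wrt (\<ge>) X" "i \<ge> 1"
  shows "cnt (conj X) i = part X i"
  unfolding conj_def cnt_def[symmetric, abs_def]
  using cnt_map_cnt[OF assms Max_ge_part1] by (simp add: cnt_def[abs_def])

lemma part_pos: "is_partition p \<Longrightarrow> 1 \<le> i \<Longrightarrow> i \<le> length p \<Longrightarrow> part p i > 0"
proof -
  assume a: "is_partition p" "1 \<le> i" "i \<le> length p"
  then have "p ! (i - 1) \<in> set p" by (intro nth_mem) auto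
  then have "p ! (i - 1) \<noteq> 0" using a unfolding is_partition_def by metis
  then show ?thesis using a unfolding part_def by simp
qed

lemma part_eq:
  assumes p: "is_partition p" and q: "is_partition q" and e: "\<And>i. i \<ge> 1 \<Longrightarrow> part p i = part q i"
  shows "p = q"
proof -
  have l: "length p = length q"
  proof (rule ccontr)
    assume "length p \<noteq> length q"
    then consider "length p < length q" | "length q < length p" by linarith
    then show False
    proof cases
      case 1
      then have "part q (length q) > 0" using part_pos[OF q] by simp
      moreover have "part p (length q) = 0" using 1 by (simp add: part_def)
      ultimately show False using e[of "length q"] 1 by simp
    next
      case 2
      then have "part p (length p) > 0" using part_pos[OF p] by simp
      moreover have "part q (length p) = 0" using 2 by (simp add: part_def)
      ultimately show False using e[of "length p"] 2 by simp
    qed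
  qed
  show ?thesis
  proof (rule nth_equalityI[OF l])
    fix i assume "i < length p"
    then show "p ! i = q ! i" using e[of "Suc i"] l by (simp add: part_def)
  qed
qed



lemma part_mono:
  assumes "sorted_wrt (\<ge>) p" "1 \<le> i" "i \<le> i'"
  shows "part p i' \<le> part p i"
proof (cases "i' \<le> length p")
  case True
  show ?thesis
  proof (cases "i = i'")
    case False
    then have "p ! (i - 1) \<ge> p ! (i' - 1)"
      using assms True by (intro sorted_wrt_nth_less[OF assms(1)]) auto
    then show ?thesis using True assms by (simp add: part_def)
  qed simp
qed (simp add: part_def)

lemma part_drop: "i \<ge> 1 \<Longrightarrow> part (drop j p) i = part p (i + j)"
  unfolding part_def by (auto simp: add.commute)

lemma finite_dset: "finite {i. 1 \<le> i \<and> i \<le> length p \<and> i \<le> part p i}"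
  by (rule finite_subset[of _ "{..length p}"]) auto

lemma durfee_le_length: "durfee p \<le> length p"
  unfolding durfee_def using finite_dset[of p] by (auto intro: Max.boundedI)

lemma durfee_in: "durfee p \<ge> 1 \<Longrightarrow> durfee p \<le> part p (durfee p)"
proof -
  assume a: "durfee p \<ge> 1"
  have "durfee p \<in> insert 0 {i. 1 \<le> i \<and> i \<le> length p \<and> i \<le> part p i}"
    unfolding durfee_def using finite_dset[of p] by (intro Max_in) auto
  then show ?thesis using a by auto
qed

lemma durfee_next: "part p (Suc (durfee p)) \<le> durfee p"
proof (rule ccontr)
  assume "\<not> ?thesis"
  then have h: "Suc (durfee p) \<le> part p (Suc (durfee p))" by simp
  then have "Suc (durfee p) \<le> length p" by (auto simp: part_def split: if_splits)
  then have "Suc (durfee p) \<in> insert 0 {i. 1 \<le> i \<and> i \<le> length p \<and> i \<le> part p i}"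
    using h by auto
  then have "Suc (durfee p) \<le> durfee p"
    unfolding durfee_def[of p] using finite_dset[of p] by (intro Max_ge) auto
  then show False by simp
qed

lemma durfee_eqI:
  assumes "1 \<le> j" "j \<le> length p" "j \<le> part p j" "\<And>i. j < i \<Longrightarrow> part p i < i"
  shows "durfee p = j"
  unfolding durfee_def
proof (rule Max_eqI)
  show "finite (insert 0 {i. 1 \<le> i \<and> i \<le> length p \<and> i \<le> part p i})" using finite_dset by simp
  fix y assume "y \<in> insert 0 {i. 1 \<le> i \<and> i \<le> length p \<and> i \<le> part p i}"
  then show "y \<le> j" using assms(4)[of y] by (cases "j < y") auto
qed (use assms in auto)

definition mk :: "nat \<Rightarrow> nat list \<Rightarrow> nat list \<Rightarrow> nat list" where
  "mk j a b = map (\<lambda>i. j + cnt a i) [1..<Suc j] @ b"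

lemma length_mk: "length (mk j a b) = j + length b"
  by (simp add: mk_def)

lemma part_mk1: "1 \<le> i \<Longrightarrow> i \<le> j \<Longrightarrow> part (mk j a b) i = j + cnt a i"
  unfolding part_def mk_def by (auto simp: nth_append nth_upt simp del: upt_Suc)

lemma part_mk2: "j < i \<Longrightarrow> part (mk j a b) i = part b (i - j)"
  unfolding part_def mk_def by (cases "j = 0") (auto simp: nth_append)

lemma mem_le_part1: "sorted_wrt (\<ge>) b \<Longrightarrow> y \<in> set b \<Longrightarrow> y \<le> part b 1"
  by (cases b) (auto simp: part_def)

lemma sum_ind: "sum_list (map (\<lambda>i. if P i then 1 else 0) xs) = length (filter P xs)"
  by (induction xs) auto

lemma sum_cnt: "\<forall>x\<in>set a. x \<le> j \<Longrightarrow> sum_list (map (cnt a) [1..<Suc j]) = sum_list a"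
proof (induction a)
  case Nil
  then show ?case by (simp add: cnt_def del: upt_Suc)
next
  case (Cons x a)
  have "map (cnt (x#a)) [1..<Suc j] = map (\<lambda>i. (if i \<le> x then 1 else 0) + cnt a i) [1..<Suc j]"
    by (auto simp: cnt_Cons simp del: upt_Suc)
  then have "sum_list (map (cnt (x#a)) [1..<Suc j]) =
      sum_list (map (\<lambda>i. if i \<le> x then 1 else 0) [1..<Suc j]) + sum_list (map (cnt a) [1..<Suc j])"
    by (simp only: sum_list_addf)
  also have "sum_list (map (\<lambda>i. if i \<le> x then 1 else 0) [1..<Suc j]) = x"
    using filter_upt_le[of x j] Cons.prems by (simp add: sum_ind del: upt_Suc)
  finally show ?case using Cons by simp
qed

lemma sum_list_const: "sum_list (map (\<lambda>i. c) xs) = c * length xs"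
  by (induction xs) auto

lemma mk_props:
  assumes a: "is_partition a" and b: "is_partition b" and "part a 1 \<le> j" "part b 1 \<le> j" "1 \<le> j"
  shows "is_partition (mk j a b)" "durfee (mk j a b) = j" "dalpha (mk j a b) = a"
    "dbeta (mk j a b) = b" "sum_list (mk j a b) = j * j + sum_list a + sum_list b"
proof -
  have sa: "sorted_wrt (\<ge>) a" and sb: "sorted_wrt (\<ge>) b" and zb: "0 \<notin> set b"
    using a b by (auto simp: is_partition_def)
  have s1: "sorted_wrt (\<ge>) (map (\<lambda>i. j + cnt a i) [1..<Suc j])"
    by (auto simp: sorted_wrt_map sorted_wrt_iff_nth_less cnt_antimono nth_upt simp del: upt_Suc)
  have bl: "\<forall>y\<in>set b. y \<le> j" using mem_le_part1[OF sb] assms(4) by fastforce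
  show "is_partition (mk j a b)"
    unfolding is_partition_def mk_def using s1 sb zb bl \<open>1 \<le> j\<close>
    by (auto simp: sorted_wrt_append simp del: upt_Suc)
  show "durfee (mk j a b) = j"
  proof (rule durfee_eqI)
    show "j \<le> part (mk j a b) j" using part_mk1[of j j a b] assms by simp
    show "j \<le> length (mk j a b)" by (simp add: length_mk)
    fix i assume "j < i"
    then have "part (mk j a b) i = part b (i - j)" by (rule part_mk2)
    also have "\<dots> \<le> part b 1" using \<open>j < i\<close> by (intro part_mono[OF sb]) auto
    finally show "part (mk j a b) i < i" using assms(4) \<open>j < i\<close> by simp
  qed (use assms in auto)
  then show "dbeta (mk j a b) = b" by (simp add: dbeta_def mk_def)
  have tk: "map (\<lambda>x. x - j) (take j (mk j a b)) = map (cnt a) [1..<Suc j]"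
    by (simp add: mk_def o_def del: upt_Suc)
  have "dalpha (mk j a b) = conj (map (cnt a) [1..<Suc j])"
    by (simp add: dalpha_def \<open>durfee (mk j a b) = j\<close> tk del: upt_Suc)
  moreover have "conj (map (cnt a) [1..<Suc j]) = a"
  proof (rule part_eq[OF conj_partition a])
    fix i :: nat assume "1 \<le> i"
    then show "part (conj (map (cnt a) [1..<Suc j])) i = part a i"
      using part_conj cnt_map_cnt[OF sa _ assms(3)] by simp
  qed
  ultimately show "dalpha (mk j a b) = a" by simp
  have al: "\<forall>x\<in>set a. x \<le> j" using mem_le_part1[OF sa] assms(3) by fastforce
  show "sum_list (mk j a b) = j * j + sum_list a + sum_list b"
    using sum_cnt[OF al] by (simp add: mk_def sum_list_addf sum_list_const del: upt_Suc)
qed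



lemma decomp:
  assumes p: "is_partition p"
  shows "p = mk (durfee p) (dalpha p) (dbeta p)" "is_partition (dalpha p)" "is_partition (dbeta p)"
    "part (dalpha p) 1 \<le> durfee p" "part (dbeta p) 1 \<le> durfee p"
proof -
  define j where "j = durfee p"
  define X where "X = map (\<lambda>x. x - j) (take j p)"
  have sp: "sorted_wrt (\<ge>) p" using p by (simp add: is_partition_def)
  have jl: "j \<le> length p" unfolding j_def by (rule durfee_le_length)
  have sX: "sorted_wrt (\<ge>) X" unfolding X_def
    by (simp add: sorted_wrt_map) (rule sorted_wrt_mono_rel[OF _ sorted_wrt_take[OF sp]], simp add: diff_le_mono)
  have lX: "length X = j" using jl by (simp add: X_def)
  have da: "dalpha p = conj X" by (simp add: dalpha_def X_def j_def)
  show "is_partition (dalpha p)" by (simp add: da conj_partition)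
  show "is_partition (dbeta p)" using p unfolding dbeta_def is_partition_def
    by (auto simp: sorted_wrt_drop dest: in_set_dropD)
  show "part (dalpha p) 1 \<le> durfee p" using part_conj[of 1 X] cnt_le_length[of X 1] lX
    by (simp add: da j_def)
  show "part (dbeta p) 1 \<le> durfee p" using part_drop[of 1 "durfee p" p] durfee_next[of p]
    by (simp add: dbeta_def)
  have tk: "take j p = map (\<lambda>i. j + cnt (dalpha p) i) [1..<Suc j]"
  proof (rule nth_equalityI)
    show "length (take j p) = length (map (\<lambda>i. j + cnt (dalpha p) i) [1..<Suc j])"
      using jl by simp
    fix k assume k: "k < length (take j p)"
    then have kj: "k < j" by simp
    have "cnt (dalpha p) (Suc k) = part X (Suc k)" using cnt_conj[OF sX] by (simp add: da)
    also have "\<dots> = p ! k - j" using kj jl by (simp add: part_def X_def)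
    finally have c: "cnt (dalpha p) (Suc k) = p ! k - j" .
    have "j \<le> part p j" using durfee_in[of p] kj by (simp add: j_def)
    also have "part p j \<le> part p (Suc k)" using kj by (intro part_mono[OF sp]) auto
    also have "part p (Suc k) = p ! k" using kj jl by (simp add: part_def)
    finally have "j \<le> p ! k" .
    then show "take j p ! k = map (\<lambda>i. j + cnt (dalpha p) i) [1..<Suc j] ! k"
      using kj c by (simp add: nth_upt del: upt_Suc)
  qed
  show "p = mk (durfee p) (dalpha p) (dbeta p)"
    using tk append_take_drop_id[of j p] by (simp add: mk_def dbeta_def j_def[symmetric] del: upt_Suc)
qed



lemma enat2: "(2 \<le> enat m) = (2 \<le> m)" "(enat m = 2) = (m = 2)"
  by (auto simp: numeral_eq_enat)

lemma smallest_ge2: "xs \<noteq> [] \<Longrightarrow> (smallest xs \<ge> 2) = (\<forall>x\<in>set xs. 2 \<le> x)"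
  by (simp add: smallest_def enat2)

lemma smallest_eq2: "(smallest xs = 2) = (xs \<noteq> [] \<and> 2 \<in> set xs \<and> (\<forall>x\<in>set xs. 2 \<le> x))"
proof (cases "xs = []")
  case False
  then show ?thesis
  proof -
    have "(Min (set xs) = 2) = (2 \<in> set xs \<and> (\<forall>x\<in>set xs. 2 \<le> x))"
    proof
      assume m: "Min (set xs) = 2"
      show "2 \<in> set xs \<and> (\<forall>x\<in>set xs. 2 \<le> x)"
        using m False Min_in[of "set xs"] Min_le[of "set xs"] by (metis List.finite_set set_empty)
    qed (auto intro!: Min_eqI)
    then show ?thesis using False by (simp add: smallest_def enat2)
  qed
qed (simp add: smallest_def)

lemma last_le: "sorted_wrt (\<ge>) (xs::nat list) \<Longrightarrow> y \<in> set xs \<Longrightarrow> last xs \<le> y"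
  by (induction xs) (auto simp: last_ConsR)

lemma cnt1: "0 \<notin> set g \<Longrightarrow> cnt g 1 = length g"
  unfolding cnt_def by (induction g) auto

definition Qt :: "nat \<Rightarrow> nat list \<Rightarrow> nat list \<Rightarrow> bool" where
  "Qt j ua ub \<longleftrightarrow> j \<ge> 2 \<and> sorted_wrt (\<ge>) ua \<and> (\<forall>x\<in>set ua. 2 \<le> x \<and> x \<le> j) \<and>
     sorted_wrt (\<ge>) ub \<and> (\<forall>x\<in>set ub. 2 \<le> x \<and> x \<le> j) \<and> length ua \<le> length ub"

definition mkQ :: "nat \<Rightarrow> nat list \<Rightarrow> nat list \<Rightarrow> nat list" where
  "mkQ j ua ub = mk j (j#j#ua) (j#j#ub@[2])"

definition Pt :: "nat \<Rightarrow> nat list \<Rightarrow> nat list \<Rightarrow> bool" where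
  "Pt k gt dt \<longleftrightarrow> k \<ge> 3 \<and> sorted_wrt (\<ge>) gt \<and> (\<forall>x\<in>set gt. 1 \<le> x \<and> x \<le> k - 2) \<and>
     sorted_wrt (\<ge>) dt \<and> (\<forall>x\<in>set dt. 1 \<le> x \<and> x \<le> k \<and> x \<noteq> 2) \<and> length gt = length dt"

definition mkP :: "nat \<Rightarrow> nat list \<Rightarrow> nat list \<Rightarrow> nat list" where
  "mkP k gt dt = mk k ((k-1)#gt) (k#dt)"

lemma Q_props:
  assumes "Qt j ua ub"
  shows "mkQ j ua ub \<in> Q4bar (sum_list (mkQ j ua ub))" "durfee (mkQ j ua ub) = j"
    "dalpha (mkQ j ua ub) = j#j#ua" "dbeta (mkQ j ua ub) = j#j#ub@[2]"
    "sum_list (mkQ j ua ub) = j * j + 4 * j + 2 + sum_list ua + sum_list ub"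
proof -
  have Q: "j \<ge> 2" "sorted_wrt (\<ge>) ua" "\<forall>x\<in>set ua. 2 \<le> x \<and> x \<le> j"
     "sorted_wrt (\<ge>) ub" "\<forall>x\<in>set ub. 2 \<le> x \<and> x \<le> j" "length ua \<le> length ub"
    using assms by (auto simp: Qt_def)
  have pa: "is_partition (j#j#ua)" using Q unfolding is_partition_def by auto
  have pb: "is_partition (j#j#ub@[2])" using Q unfolding is_partition_def
    by (auto simp: sorted_wrt_append)
  note m = mk_props[OF pa pb, of j, folded mkQ_def]
  have h: "part (j#j#ua) 1 \<le> j" "part (j#j#ub@[2]) 1 \<le> j" "1 \<le> j" using Q by (auto simp: part_def)
  show d: "durfee (mkQ j ua ub) = j" "dalpha (mkQ j ua ub) = j#j#ua" "dbeta (mkQ j ua ub) = j#j#ub@[2]"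
    using m h by auto
  show "sum_list (mkQ j ua ub) = j * j + 4 * j + 2 + sum_list ua + sum_list ub"
    using m h by simp
  have sa: "smallest (j#j#ua) \<ge> 2" using Q by (subst smallest_ge2) auto
  have sb: "smallest (j#j#ub@[2]) = 2" using Q by (subst smallest_eq2) auto
  show "mkQ j ua ub \<in> Q4bar (sum_list (mkQ j ua ub))"
    unfolding Q4bar_def partitions_def using m h d sa sb Q(1,6)
    by (simp add: Let_def part_def)
qed

lemma Q_char:
  assumes "p \<in> Q4bar n"
  shows "\<exists>j ua ub. Qt j ua ub \<and> p = mkQ j ua ub"
proof -
  define j a b where "j = durfee p" "a = dalpha p" "b = dbeta p"
  have p: "is_partition p" using assms by (simp add: Q4bar_def partitions_def)
  note dc = decomp[OF p, folded j_a_b_def]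
  have c: "j \<ge> 1" "int (length b) - int (length a) \<ge> 1" "part a 1 = j" "part a 2 = j"
    "smallest a \<ge> 2" "part b 1 = j" "part b 2 = j" "smallest b = 2"
    using assms unfolding Q4bar_def j_a_b_def by (auto simp: Let_def)
  have sa: "sorted_wrt (\<ge>) a" and sb: "sorted_wrt (\<ge>) b"
    using dc by (auto simp: is_partition_def)
  obtain ua where a: "a = j#j#ua"
    using c(1,3,4) unfolding part_def
    by (cases a; cases "tl a") (auto split: if_splits)
  have b0: "b \<noteq> []" "2 \<in> set b" "\<forall>x\<in>set b. 2 \<le> x" using c(8) smallest_eq2 by auto
  obtain b' where b: "b = j#j#b'"
    using c(1,6,7) unfolding part_def
    by (cases b; cases "tl b") (auto split: if_splits)
  have lb: "length b' \<ge> length ua + 1" using c(2) a b by simp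
  then have b'ne: "b' \<noteq> []" by auto
  have lastb: "last b' = 2"
  proof -
    have "last b \<le> 2" using last_le[OF sb b0(2)] .
    moreover have "last b = last b'" using b b'ne by simp
    moreover have "last b' \<in> set b" using b b'ne by simp
    ultimately show ?thesis using b0(3) by fastforce
  qed
  define ub where "ub = butlast b'"
  have b2: "b = j#j#ub@[2]" using b append_butlast_last_id[OF b'ne] lastb by (simp add: ub_def)
  have aj: "\<forall>x\<in>set a. x \<le> j" using mem_le_part1[OF sa] c(3) by fastforce
  have bj: "\<forall>x\<in>set b. x \<le> j" using mem_le_part1[OF sb] c(6) by fastforce
  have a2: "\<forall>x\<in>set a. 2 \<le> x" using c(5) smallest_ge2[of a] a by auto
  have "Qt j ua ub"
    unfolding Qt_def using sa sb aj bj a2 b0 lb unfolding a b2 ub_def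
    by (auto simp: sorted_wrt_append)
  moreover have "p = mkQ j ua ub" using dc(1) a b2 by (simp add: mkQ_def)
  ultimately show ?thesis by blast
qed

lemma P_props:
  assumes "Pt k gt dt"
  shows "mkP k gt dt \<in> P7 (sum_list (mkP k gt dt))" "durfee (mkP k gt dt) = k"
    "dalpha (mkP k gt dt) = (k-1)#gt" "dbeta (mkP k gt dt) = k#dt"
    "sum_list (mkP k gt dt) = k * k + (k - 1) + k + sum_list gt + sum_list dt"
proof -
  have P: "k \<ge> 3" "sorted_wrt (\<ge>) gt" "\<forall>x\<in>set gt. 1 \<le> x \<and> x \<le> k - 2"
     "sorted_wrt (\<ge>) dt" "\<forall>x\<in>set dt. 1 \<le> x \<and> x \<le> k \<and> x \<noteq> 2" "length gt = length dt"
    using assms by (auto simp: Pt_def)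
  have pa: "is_partition ((k-1)#gt)" using P unfolding is_partition_def by auto
  have pb: "is_partition (k#dt)" using P unfolding is_partition_def by auto
  note m = mk_props[OF pa pb, of k, folded mkP_def]
  have h: "part ((k-1)#gt) 1 \<le> k" "part (k#dt) 1 \<le> k" "1 \<le> k" using P by (auto simp: part_def)
  show d: "durfee (mkP k gt dt) = k" "dalpha (mkP k gt dt) = (k-1)#gt" "dbeta (mkP k gt dt) = k#dt"
    using m h by auto
  show "sum_list (mkP k gt dt) = k * k + (k - 1) + k + sum_list gt + sum_list dt"
    using m h by simp
  have r1: "part (mkP k gt dt) 1 = k + length ((k-1)#gt)"
    using part_mk1[of 1 k] h cnt1[of "(k-1)#gt"] pa unfolding mkP_def is_partition_def by simp
  have r: "rank (mkP k gt dt) \<ge> 0"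
    unfolding rank_def r1 by (simp add: mkP_def length_mk P(6))
  have g2: "part ((k-1)#gt) 2 < k - 1"
  proof (cases gt)
    case Nil then show ?thesis using P by (simp add: part_def)
  next
    case (Cons x xs) then show ?thesis using P by (auto simp: part_def)
  qed
  show "mkP k gt dt \<in> P7 (sum_list (mkP k gt dt))"
    unfolding P7_def partitions_def using m h d r g2 P
    by (auto simp: Let_def part_def)
qed

lemma P_char:
  assumes "q \<in> P7 n"
  shows "\<exists>k gt dt. Pt k gt dt \<and> q = mkP k gt dt"
proof -
  define k g d where "k = durfee q" "g = dalpha q" "d = dbeta q"
  have q: "is_partition q" using assms by (simp add: P7_def partitions_def)
  note dc = decomp[OF q, folded k_g_d_def]
  have c: "k \<ge> 1" "length g = length d" "part g 1 = k - 1" "k - 1 > part g 2"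
    "part d 1 = k" "2 \<notin> set d"
    using assms unfolding P7_def k_g_d_def by (auto simp: Let_def)
  have sg: "sorted_wrt (\<ge>) g" and sd: "sorted_wrt (\<ge>) d" and zg: "0 \<notin> set g" and zd: "0 \<notin> set d"
    using dc by (auto simp: is_partition_def)
  obtain gt where g: "g = (k-1)#gt"
    using c(3,4) unfolding part_def by (cases g) (auto split: if_splits)
  obtain dt where d: "d = k#dt"
    using c(1,5) unfolding part_def by (cases d) (auto split: if_splits)
  have k3: "k \<ge> 3" using c(1,4,6) d by auto
  have gt: "\<forall>x\<in>set gt. 1 \<le> x \<and> x \<le> k - 2"
  proof
    fix x assume x: "x \<in> set gt"
    then have "x \<le> part gt 1" using sg g mem_le_part1[of gt x] by simp
    moreover have "part gt 1 = part g 2" using g by (simp add: part_Cons)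
    moreover have "x \<noteq> 0" using zg x unfolding g by (metis list.set_intros(2))
    ultimately show "1 \<le> x \<and> x \<le> k - 2" using c(4) by auto
  qed
  have dt: "\<forall>x\<in>set dt. 1 \<le> x \<and> x \<le> k \<and> x \<noteq> 2"
  proof
    fix x assume x: "x \<in> set dt"
    have "x \<noteq> 0" using zd x unfolding d by (metis list.set_intros(2))
    moreover have "x \<le> k" using sd x d by auto
    moreover have "x \<noteq> 2" using c(6) x d by auto
    ultimately show "1 \<le> x \<and> x \<le> k \<and> x \<noteq> 2" by auto
  qed
  have "Pt k gt dt" unfolding Pt_def using k3 gt dt sg sd g d c(2) by auto
  moreover have "q = mkP k gt dt" using dc(1) g d by (simp add: mkP_def)
  ultimately show ?thesis by blast
qed



lemma sum_minus1: "\<forall>x\<in>set xs. 1 \<le> x \<Longrightarrow> sum_list (map (\<lambda>x. x - 1) xs) + length xs = sum_list (xs::nat list)"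
  by (induction xs) auto

lemma sum_Suc: "sum_list (map Suc xs) = sum_list xs + length xs"
  by (induction xs) auto

lemma split1:
  assumes "sorted_wrt (\<ge>) dt" "\<forall>x\<in>set dt. 1 \<le> x"
  shows "dt = filter (\<lambda>x. x \<noteq> 1) dt @ replicate (length dt - length (filter (\<lambda>x. x \<noteq> 1) dt)) (1::nat)"
  using assms
proof (induction dt)
  case (Cons x xs)
  show ?case
  proof (cases "x = 1")
    case True
    then have "\<forall>y\<in>set xs. y = 1" using Cons.prems by fastforce
    then have "filter (\<lambda>x. x \<noteq> 1) xs = []" "replicate (length xs) 1 = xs"
      by (auto simp: filter_empty_conv replicate_length_same)
    then show ?thesis using True by simp
  next
    case False
    have "length (filter (\<lambda>x. x \<noteq> 1) xs) \<le> length xs" by simp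
    then show ?thesis using False Cons by (simp add: Suc_diff_le[symmetric])
  qed
qed simp

lemma sorted_rep: "sorted_wrt (\<ge>) (replicate n (x::nat))"
  by (induction n) auto

lemma sorted_minus1: "sorted_wrt (\<ge>) (xs::nat list) \<Longrightarrow> sorted_wrt (\<lambda>x y. y - 1 \<le> x - 1) xs"
  by (rule sorted_wrt_mono_rel[of _ "(\<ge>)"]) (auto simp: diff_le_mono)

definition FQ :: "nat \<Rightarrow> nat list \<Rightarrow> nat list \<Rightarrow> nat list" where
  "FQ j ua ub = mkP (j+1) (map (\<lambda>x. x - 1) ub) (map Suc ua @ replicate (length ub - length ua) 1)"

definition GP :: "nat \<Rightarrow> nat list \<Rightarrow> nat list \<Rightarrow> nat list" where
  "GP k gt dt = mkQ (k - 1) (map (\<lambda>x. x - 1) (filter (\<lambda>x. x \<noteq> 1) dt)) (map Suc gt)"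

lemma QtoP:
  assumes "Qt j ua ub"
  shows "Pt (j+1) (map (\<lambda>x. x - 1) ub) (map Suc ua @ replicate (length ub - length ua) 1)"
    "sum_list (FQ j ua ub) = sum_list (mkQ j ua ub)"
    "GP (j+1) (map (\<lambda>x. x - 1) ub) (map Suc ua @ replicate (length ub - length ua) 1) = mkQ j ua ub"
proof -
  have Q: "j \<ge> 2" "sorted_wrt (\<ge>) ua" "\<forall>x\<in>set ua. 2 \<le> x \<and> x \<le> j"
     "sorted_wrt (\<ge>) ub" "\<forall>x\<in>set ub. 2 \<le> x \<and> x \<le> j" "length ua \<le> length ub"
    using assms by (auto simp: Qt_def)
  show P: "Pt (j+1) (map (\<lambda>x. x - 1) ub) (map Suc ua @ replicate (length ub - length ua) 1)"
    unfolding Pt_def using Q sorted_minus1[OF Q(4)]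
    by (auto simp: sorted_wrt_map sorted_wrt_append sorted_rep sorted_minus1)
  have "sum_list (FQ j ua ub) = (j+1) * (j+1) + (j + 1 - 1) + (j + 1) + sum_list (map (\<lambda>x. x - 1) ub)
      + sum_list (map Suc ua @ replicate (length ub - length ua) 1)"
    unfolding FQ_def by (rule P_props(5)[OF P])
  also have "\<dots> = j * j + 4 * j + 2 + sum_list ua + sum_list ub"
  proof -
    have "sum_list (map (\<lambda>x. x - 1) ub) + length ub = sum_list ub" using Q(5) by (intro sum_minus1) auto
    then show ?thesis using sum_Suc[of ua] Q(6) by (simp add: sum_list_replicate algebra_simps)
  qed
  also have "\<dots> = sum_list (mkQ j ua ub)" using Q_props(5)[OF assms] by simp
  finally show "sum_list (FQ j ua ub) = sum_list (mkQ j ua ub)" .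
  have "filter (\<lambda>x. x \<noteq> 1) (map Suc ua @ replicate (length ub - length ua) 1) = map Suc ua"
    using Q(3) by (auto simp: filter_id_conv)
  moreover have "map Suc (map (\<lambda>x. x - 1) ub) = ub" using Q(5) by (induction ub) auto
  ultimately show "GP (j+1) (map (\<lambda>x. x - 1) ub) (map Suc ua @ replicate (length ub - length ua) 1) = mkQ j ua ub"
    by (simp add: GP_def o_def)
qed

lemma PtoQ:
  assumes "Pt k gt dt"
  shows "Qt (k - 1) (map (\<lambda>x. x - 1) (filter (\<lambda>x. x \<noteq> 1) dt)) (map Suc gt)"
    "FQ (k - 1) (map (\<lambda>x. x - 1) (filter (\<lambda>x. x \<noteq> 1) dt)) (map Suc gt) = mkP k gt dt"
proof -
  have P: "k \<ge> 3" "sorted_wrt (\<ge>) gt" "\<forall>x\<in>set gt. 1 \<le> x \<and> x \<le> k - 2"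
     "sorted_wrt (\<ge>) dt" "\<forall>x\<in>set dt. 1 \<le> x \<and> x \<le> k \<and> x \<noteq> 2" "length gt = length dt"
    using assms by (auto simp: Pt_def)
  have lf: "length (filter (\<lambda>x. x \<noteq> 1) dt) \<le> length dt" by simp
  show "Qt (k - 1) (map (\<lambda>x. x - 1) (filter (\<lambda>x. x \<noteq> 1) dt)) (map Suc gt)"
    unfolding Qt_def using P lf sorted_minus1[OF sorted_wrt_filter[OF P(4)]]
    by (auto simp: sorted_wrt_map sorted_wrt_filter)
  have "map Suc (map (\<lambda>x. x - 1) (filter (\<lambda>x. x \<noteq> 1) dt)) = filter (\<lambda>x. x \<noteq> 1) dt"
    using P(5) by (induction dt) auto
  moreover have "map (\<lambda>x. x - 1) (map Suc gt) = gt" by (induction gt) auto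
  moreover have "dt = filter (\<lambda>x. x \<noteq> 1) dt @ replicate (length dt - length (filter (\<lambda>x. x \<noteq> 1) dt)) 1"
    using split1[OF P(4)] P(5) by auto
  ultimately show "FQ (k - 1) (map (\<lambda>x. x - 1) (filter (\<lambda>x. x \<noteq> 1) dt)) (map Suc gt) = mkP k gt dt"
    using P(1,6) by (simp add: FQ_def)
qed

definition ff :: "nat list \<Rightarrow> nat list" where
  "ff p = FQ (durfee p) (drop 2 (dalpha p)) (drop 2 (butlast (dbeta p)))"

definition gg :: "nat list \<Rightarrow> nat list" where
  "gg q = GP (durfee q) (tl (dalpha q)) (tl (dbeta q))"

lemma ff_mkQ: "Qt j ua ub \<Longrightarrow> ff (mkQ j ua ub) = FQ j ua ub"
  using Q_props[of j ua ub] by (simp add: ff_def butlast_append)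

lemma gg_mkP: "Pt k gt dt \<Longrightarrow> gg (mkP k gt dt) = GP k gt dt"
  using P_props[of k gt dt] by (simp add: gg_def)

theorem lemma5p4:
  fixes n :: nat
  assumes "n \<ge> 1"
  shows "\<exists>f. bij_betw f (Q4bar n) (P7 n)"
proof (intro exI bij_betw_byWitness[where f' = gg])
  show "\<forall>a\<in>Q4bar n. gg (ff a) = a"
  proof
    fix p assume "p \<in> Q4bar n"
    then obtain j ua ub where t: "Qt j ua ub" "p = mkQ j ua ub" using Q_char by blast
    have "ff p = mkP (j+1) (map (\<lambda>x. x - 1) ub) (map Suc ua @ replicate (length ub - length ua) 1)"
      using t ff_mkQ by (simp add: FQ_def)
    then show "gg (ff p) = p" using gg_mkP[OF QtoP(1)[OF t(1)]] QtoP(3)[OF t(1)] t(2) by simp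
  qed
  show "\<forall>a\<in>P7 n. ff (gg a) = a"
  proof
    fix q assume "q \<in> P7 n"
    then obtain k gt dt where t: "Pt k gt dt" "q = mkP k gt dt" using P_char by blast
    have "gg q = mkQ (k - 1) (map (\<lambda>x. x - 1) (filter (\<lambda>x. x \<noteq> 1) dt)) (map Suc gt)"
      using t gg_mkP by (simp add: GP_def)
    then show "ff (gg q) = q" using ff_mkQ[OF PtoQ(1)[OF t(1)]] PtoQ(2)[OF t(1)] t(2) by simp
  qed
  show "ff ` Q4bar n \<subseteq> P7 n"
  proof
    fix r assume "r \<in> ff ` Q4bar n"
    then obtain p where p: "p \<in> Q4bar n" "r = ff p" by blast
    then obtain j ua ub where t: "Qt j ua ub" "p = mkQ j ua ub" using Q_char by blast
    have n: "n = sum_list p" using p(1) by (simp add: Q4bar_def partitions_def)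
    have "r = FQ j ua ub" using p t ff_mkQ by simp
    then show "r \<in> P7 n"
      using P_props(1)[OF QtoP(1)[OF t(1)]] QtoP(2)[OF t(1)] n t(2) by (simp add: FQ_def)
  qed
  show "gg ` P7 n \<subseteq> Q4bar n"
  proof
    fix r assume "r \<in> gg ` P7 n"
    then obtain q where q: "q \<in> P7 n" "r = gg q" by blast
    then obtain k gt dt where t: "Pt k gt dt" "q = mkP k gt dt" using P_char by blast
    have n: "n = sum_list q" using q(1) by (simp add: P7_def partitions_def)
    have r: "r = GP k gt dt" using q t gg_mkP by simp
    note t1 = PtoQ[OF t(1)]
    have "sum_list r = sum_list q"
      using QtoP(2)[OF t1(1)] t1(2) r t(2) by (simp add: GP_def)
    then show "r \<in> Q4bar n"
      using Q_props(1)[OF t1(1)] n r by (simp add: GP_def)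
  qed
qed


end
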